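(* Let $\mathbb{E}$ be a regular category, $\Sigma$ a fibrational class of split epimorphisms, and suppose $\mathbb{E}$ is a $\Sigma$-Mal'tsev category. Let $f\colon X\to Y$ be a regular epimorphism and $S$ a $\Sigma$-relation on $X$. Then the direct image $f(S)$ of $S$ along $f$ is a transitive relation on $Y$. In particular, the direct image along a regular epimorphism of a $\Sigma$-equivalence relation is an equivalence relation.
   Context: A split epimorphism is a pair $(f,s)$ with $fs=1$. A class $\Sigma$ of split epimorphisms is fibrational if it contains all split epimorphisms $(f,s)$ with $f$ invertible and is stable under pullback along any morphism. A pair of morphisms with common codomain $Z$ is jointly extremally epic if it factors jointly through no non-invertible monomorphism into $Z$. $\mathbb{E}$ is $\Sigma$-Mal'tsev if for every split epimorphism $(f,s)\colon X\rightleftarrows Y$ in $\Sigma$ and every split epimorphism $(g,t)$ with $g\colon Y'\to Y$, letting $X'=Y'\times_YX$, $s'=(1_{Y'},sg)$, $\bar t=(tf,1_X)$, the pair $(s',\bar t)$ is jointly extremally epic. A $\Sigma$-relation is a reflexive relation $(d_0,d_1)\colon S\rightarrowtail X\times X$ with reflexivity $s_0$ such that $(d_0,s_0)\in\Sigma$; a $\Sigma$-equivalence relation is an equivalence relation which is a $\Sigma$-relation. The direct image $f(S)$ is the image (regular epi–mono factorization) of $(f\times f)\circ(d_0,d_1)\colon S\to Y\times Y$. *)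

theory Defs
  imports Main
begin

record ('o, 'a) cat =
  Obj :: "'o set"
  Arr :: "'a set"
  Dom :: "'a \<Rightarrow> 'o"
  Cod :: "'a \<Rightarrow> 'o"
  Id  :: "'o \<Rightarrow> 'a"
  Comp :: "'a \<Rightarrow> 'a \<Rightarrow> 'a"  \<comment> \<open>Comp C g f = g \<circ> f\<close>

definition hom :: "('o,'a) cat \<Rightarrow> 'a \<Rightarrow> 'o \<Rightarrow> 'o \<Rightarrow> bool" where
  "hom C f X Y \<longleftrightarrow> f \<in> Arr C \<and> Dom C f = X \<and> Cod C f = Y"

definition category :: "('o,'a) cat \<Rightarrow> bool" where
  "category C \<longleftrightarrow>
     (\<forall>f \<in> Arr C. Dom C f \<in> Obj C \<and> Cod C f \<in> Obj C) \<and>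
     (\<forall>X \<in> Obj C. hom C (Id C X) X X) \<and>
     (\<forall>f g. f \<in> Arr C \<and> g \<in> Arr C \<and> Cod C f = Dom C g \<longrightarrow>
        hom C (Comp C g f) (Dom C f) (Cod C g)) \<and>
     (\<forall>f g h. f \<in> Arr C \<and> g \<in> Arr C \<and> h \<in> Arr C \<and> Cod C f = Dom C g \<and> Cod C g = Dom C h \<longrightarrow>
        Comp C h (Comp C g f) = Comp C (Comp C h g) f) \<and>
     (\<forall>f \<in> Arr C. Comp C f (Id C (Dom C f)) = f \<and> Comp C (Id C (Cod C f)) f = f)"

definition mono :: "('o,'a) cat \<Rightarrow> 'a \<Rightarrow> bool" where
  "mono C m \<longleftrightarrow> m \<in> Arr C \<and>
     (\<forall>g h. g \<in> Arr C \<and> h \<in> Arr C \<and> Cod C g = Dom C m \<and> Cod C h = Dom C m \<and>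
        Dom C g = Dom C h \<and> Comp C m g = Comp C m h \<longrightarrow> g = h)"

definition iso :: "('o,'a) cat \<Rightarrow> 'a \<Rightarrow> bool" where
  "iso C f \<longleftrightarrow> f \<in> Arr C \<and> (\<exists>g. hom C g (Cod C f) (Dom C f) \<and>
      Comp C g f = Id C (Dom C f) \<and> Comp C f g = Id C (Cod C f))"

definition split_epi :: "('o,'a) cat \<Rightarrow> 'a \<Rightarrow> 'a \<Rightarrow> bool" where
  "split_epi C f s \<longleftrightarrow> f \<in> Arr C \<and> hom C s (Cod C f) (Dom C f) \<and> Comp C f s = Id C (Cod C f)"

definition coequalizer :: "('o,'a) cat \<Rightarrow> 'a \<Rightarrow> 'a \<Rightarrow> 'a \<Rightarrow> bool" where
  "coequalizer C u v e \<longleftrightarrow>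
     u \<in> Arr C \<and> v \<in> Arr C \<and> e \<in> Arr C \<and> Dom C u = Dom C v \<and> Cod C u = Cod C v \<and>
     Dom C e = Cod C u \<and> Comp C e u = Comp C e v \<and>
     (\<forall>h Z. hom C h (Cod C u) Z \<and> Comp C h u = Comp C h v \<longrightarrow>
        (\<exists>!k. hom C k (Cod C e) Z \<and> Comp C k e = h))"

definition regular_epi :: "('o,'a) cat \<Rightarrow> 'a \<Rightarrow> bool" where
  "regular_epi C e \<longleftrightarrow> (\<exists>u v. coequalizer C u v e)"

definition pullback :: "('o,'a) cat \<Rightarrow> 'a \<Rightarrow> 'a \<Rightarrow> 'a \<Rightarrow> 'a \<Rightarrow> bool" where
  "pullback C f g p q \<longleftrightarrow>
     f \<in> Arr C \<and> g \<in> Arr C \<and> Cod C f = Cod C g \<and>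
     hom C p (Dom C p) (Dom C f) \<and> hom C q (Dom C p) (Dom C g) \<and>
     Comp C f p = Comp C g q \<and>
     (\<forall>a b W. hom C a W (Dom C f) \<and> hom C b W (Dom C g) \<and> Comp C f a = Comp C g b \<longrightarrow>
        (\<exists>!h. hom C h W (Dom C p) \<and> Comp C p h = a \<and> Comp C q h = b))"

definition product :: "('o,'a) cat \<Rightarrow> 'o \<Rightarrow> 'o \<Rightarrow> 'o \<Rightarrow> 'a \<Rightarrow> 'a \<Rightarrow> bool" where
  "product C X Y P p1 p2 \<longleftrightarrow> hom C p1 P X \<and> hom C p2 P Y \<and>
     (\<forall>a b W. hom C a W X \<and> hom C b W Y \<longrightarrow>
        (\<exists>!h. hom C h W P \<and> Comp C p1 h = a \<and> Comp C p2 h = b))"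

definition terminal :: "('o,'a) cat \<Rightarrow> 'o \<Rightarrow> bool" where
  "terminal C T \<longleftrightarrow> T \<in> Obj C \<and> (\<forall>X \<in> Obj C. \<exists>!h. hom C h X T)"

definition finitely_complete :: "('o,'a) cat \<Rightarrow> bool" where
  "finitely_complete C \<longleftrightarrow> (\<exists>T. terminal C T) \<and>
     (\<forall>f g. f \<in> Arr C \<and> g \<in> Arr C \<and> Cod C f = Cod C g \<longrightarrow> (\<exists>p q. pullback C f g p q))"

definition regular_category :: "('o,'a) cat \<Rightarrow> bool" where
  "regular_category C \<longleftrightarrow> category C \<and> finitely_complete C \<and>
     (\<forall>h \<in> Arr C. \<exists>e m. regular_epi C e \<and> mono C m \<and> Cod C e = Dom C m \<and> Comp C m e = h) \<and>
     (\<forall>f g p q. pullback C f g p q \<and> regular_epi C f \<longrightarrow> regular_epi C q)"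

text \<open>Pulling back the split epimorphism (f,s) : X \<rightleftarrows> Y along g : Y' \<rightarrow> Y,
  with pullback P, p1 : P \<rightarrow> Y', p2 : P \<rightarrow> X, g p1 = f p2, gives (p1, s')
  where s' = (1, s g).\<close>
definition fibrational :: "('o,'a) cat \<Rightarrow> ('a \<times> 'a) set \<Rightarrow> bool" where
  "fibrational C \<Sigma> \<longleftrightarrow>
     (\<forall>(f,s) \<in> \<Sigma>. split_epi C f s) \<and>
     (\<forall>f s. split_epi C f s \<and> iso C f \<longrightarrow> (f,s) \<in> \<Sigma>) \<and>
     (\<forall>f s g p1 p2 s'. (f,s) \<in> \<Sigma> \<and> pullback C g f p1 p2 \<and>
        hom C s' (Dom C g) (Dom C p1) \<and> Comp C p1 s' = Id C (Dom C g) \<and>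
        Comp C p2 s' = Comp C s g \<longrightarrow> (p1, s') \<in> \<Sigma>)"

definition jointly_extremally_epic :: "('o,'a) cat \<Rightarrow> 'a \<Rightarrow> 'a \<Rightarrow> bool" where
  "jointly_extremally_epic C a b \<longleftrightarrow> a \<in> Arr C \<and> b \<in> Arr C \<and> Cod C a = Cod C b \<and>
     (\<forall>m a' b'. mono C m \<and> Cod C m = Cod C a \<and>
        hom C a' (Dom C a) (Dom C m) \<and> hom C b' (Dom C b) (Dom C m) \<and>
        Comp C m a' = a \<and> Comp C m b' = b \<longrightarrow> iso C m)"

definition sigma_maltsev :: "('o,'a) cat \<Rightarrow> ('a \<times> 'a) set \<Rightarrow> bool" where
  "sigma_maltsev C \<Sigma> \<longleftrightarrow>
     (\<forall>f s g t p1 p2 s' tb. (f,s) \<in> \<Sigma> \<and> split_epi C g t \<and> Cod C g = Cod C f \<and>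
        pullback C g f p1 p2 \<and>
        hom C s' (Dom C g) (Dom C p1) \<and> Comp C p1 s' = Id C (Dom C g) \<and> Comp C p2 s' = Comp C s g \<and>
        hom C tb (Dom C f) (Dom C p1) \<and> Comp C p1 tb = Comp C t f \<and> Comp C p2 tb = Id C (Dom C f)
        \<longrightarrow> jointly_extremally_epic C s' tb)"

definition relation :: "('o,'a) cat \<Rightarrow> 'o \<Rightarrow> 'o \<Rightarrow> 'a \<Rightarrow> 'a \<Rightarrow> bool" where
  "relation C X S d0 d1 \<longleftrightarrow> hom C d0 S X \<and> hom C d1 S X \<and>
     (\<forall>P p1 p2 h. product C X X P p1 p2 \<and> hom C h S P \<and> Comp C p1 h = d0 \<and> Comp C p2 h = d1
        \<longrightarrow> mono C h)"

definition reflexive_with :: "('o,'a) cat \<Rightarrow> 'o \<Rightarrow> 'o \<Rightarrow> 'a \<Rightarrow> 'a \<Rightarrow> 'a \<Rightarrow> bool" where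
  "reflexive_with C X S d0 d1 s0 \<longleftrightarrow> hom C s0 X S \<and> Comp C d0 s0 = Id C X \<and> Comp C d1 s0 = Id C X"

definition reflexive_rel :: "('o,'a) cat \<Rightarrow> 'o \<Rightarrow> 'o \<Rightarrow> 'a \<Rightarrow> 'a \<Rightarrow> bool" where
  "reflexive_rel C X S d0 d1 \<longleftrightarrow> (\<exists>s0. reflexive_with C X S d0 d1 s0)"

definition symmetric_rel :: "('o,'a) cat \<Rightarrow> 'o \<Rightarrow> 'o \<Rightarrow> 'a \<Rightarrow> 'a \<Rightarrow> bool" where
  "symmetric_rel C X S d0 d1 \<longleftrightarrow>
     (\<exists>\<sigma>. hom C \<sigma> S S \<and> Comp C d0 \<sigma> = d1 \<and> Comp C d1 \<sigma> = d0)"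

text \<open>Transitivity: for the pullback P of d1 and d0 (pairs of composable related pairs),
  there is t : P \<rightarrow> S with d0 t = d0 p and d1 t = d1 q.\<close>
definition transitive_rel :: "('o,'a) cat \<Rightarrow> 'o \<Rightarrow> 'o \<Rightarrow> 'a \<Rightarrow> 'a \<Rightarrow> bool" where
  "transitive_rel C X S d0 d1 \<longleftrightarrow>
     (\<forall>p q. pullback C d1 d0 p q \<longrightarrow>
        (\<exists>t. hom C t (Dom C p) S \<and> Comp C d0 t = Comp C d0 p \<and> Comp C d1 t = Comp C d1 q))"

definition equivalence_rel :: "('o,'a) cat \<Rightarrow> 'o \<Rightarrow> 'o \<Rightarrow> 'a \<Rightarrow> 'a \<Rightarrow> bool" where
  "equivalence_rel C X S d0 d1 \<longleftrightarrow> relation C X S d0 d1 \<and> reflexive_rel C X S d0 d1 \<and>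
     symmetric_rel C X S d0 d1 \<and> transitive_rel C X S d0 d1"

definition sigma_relation :: "('o,'a) cat \<Rightarrow> ('a \<times> 'a) set \<Rightarrow> 'o \<Rightarrow> 'o \<Rightarrow> 'a \<Rightarrow> 'a \<Rightarrow> 'a \<Rightarrow> bool" where
  "sigma_relation C \<Sigma> X S d0 d1 s0 \<longleftrightarrow> relation C X S d0 d1 \<and> reflexive_with C X S d0 d1 s0 \<and>
     (d0, s0) \<in> \<Sigma>"

definition sigma_equivalence_relation :: "('o,'a) cat \<Rightarrow> ('a \<times> 'a) set \<Rightarrow> 'o \<Rightarrow> 'o \<Rightarrow> 'a \<Rightarrow> 'a \<Rightarrow> 'a \<Rightarrow> bool" where
  "sigma_equivalence_relation C \<Sigma> X S d0 d1 s0 \<longleftrightarrow>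
     equivalence_rel C X S d0 d1 \<and> sigma_relation C \<Sigma> X S d0 d1 s0"

text \<open>Direct image data: (P,\<pi>1,\<pi>2) a product Y \<times> Y, and S --e--> I --m--> Y \<times> Y the
  (regular epi, mono) factorization of (f \<times> f) \<circ> (d0,d1) = (f d0, f d1).
  The direct image f(S) is the relation (I, \<pi>1 m, \<pi>2 m) on Y.\<close>
definition direct_image_data :: "('o,'a) cat \<Rightarrow> 'a \<Rightarrow> 'o \<Rightarrow> 'o \<Rightarrow> 'a \<Rightarrow> 'a \<Rightarrow>
    'o \<Rightarrow> 'a \<Rightarrow> 'a \<Rightarrow> 'o \<Rightarrow> 'a \<Rightarrow> 'a \<Rightarrow> bool" where
  "direct_image_data C f Y S d0 d1 P \<pi>1 \<pi>2 I e m \<longleftrightarrow>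
     product C Y Y P \<pi>1 \<pi>2 \<and> hom C e S I \<and> regular_epi C e \<and> hom C m I P \<and> mono C m \<and>
     Comp C \<pi>1 (Comp C m e) = Comp C f d0 \<and> Comp C \<pi>2 (Comp C m e) = Comp C f d1"

end

theory Submission
  imports Defs
begin


locale rcat = fixes C :: "('o,'a) cat" assumes cat: "category C"
begin

abbreviation cmp (infixr "\<cdot>" 55) where "g \<cdot> f \<equiv> Comp C g f"

lemma arr_comp[simp]: "f \<in> Arr C \<Longrightarrow> g \<in> Arr C \<Longrightarrow> Cod C f = Dom C g \<Longrightarrow> g \<cdot> f \<in> Arr C"
  using cat unfolding category_def unfolding hom_def by blast
lemma dom_comp[simp]: "f \<in> Arr C \<Longrightarrow> g \<in> Arr C \<Longrightarrow> Cod C f = Dom C g \<Longrightarrow> Dom C (g \<cdot> f) = Dom C f"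
  using cat unfolding category_def unfolding hom_def by blast
lemma cod_comp[simp]: "f \<in> Arr C \<Longrightarrow> g \<in> Arr C \<Longrightarrow> Cod C f = Dom C g \<Longrightarrow> Cod C (g \<cdot> f) = Cod C g"
  using cat unfolding category_def unfolding hom_def by blast
lemma assoc[simp]: "f \<in> Arr C \<Longrightarrow> g \<in> Arr C \<Longrightarrow> h \<in> Arr C \<Longrightarrow> Cod C f = Dom C g \<Longrightarrow> Cod C g = Dom C h
   \<Longrightarrow> (h \<cdot> g) \<cdot> f = h \<cdot> (g \<cdot> f)"
  using cat unfolding category_def by (elim conjE) (rule sym, blast)
lemma idl[simp]: "f \<in> Arr C \<Longrightarrow> Cod C f = B \<Longrightarrow> Id C B \<cdot> f = f"
  using cat unfolding category_def by blast
lemma idr[simp]: "f \<in> Arr C \<Longrightarrow> Dom C f = B \<Longrightarrow> f \<cdot> Id C B = f"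
  using cat unfolding category_def by blast
lemma id_hom: "A \<in> Obj C \<Longrightarrow> hom C (Id C A) A A"
  using cat unfolding category_def by blast
lemma dom_obj: "f \<in> Arr C \<Longrightarrow> Dom C f \<in> Obj C"
  using cat unfolding category_def by blast
lemma cod_obj: "f \<in> Arr C \<Longrightarrow> Cod C f \<in> Obj C"
  using cat unfolding category_def by blast

lemma comp_hom: "hom C f A B \<Longrightarrow> hom C g B D \<Longrightarrow> hom C (g \<cdot> f) A D"
  unfolding hom_def by simp

lemma assoc_ext: assumes a: "g \<cdot> f = h" "f \<in> Arr C" "g \<in> Arr C" "x \<in> Arr C" "Cod C f = Dom C g"
   "Cod C x = Dom C f" shows "g \<cdot> (f \<cdot> x) = h \<cdot> x"
proof -
  have 1: "(g \<cdot> f) \<cdot> x = g \<cdot> (f \<cdot> x)" by (rule assoc) (fact a)+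
  have 2: "(g \<cdot> f) \<cdot> x = h \<cdot> x" using a(1) by (rule arg_cong[where f="\<lambda>z. z \<cdot> x"])
  show ?thesis by (rule trans[OF 1[symmetric] 2])
qed

lemma assoc_ext3: assumes a: "h \<cdot> (g \<cdot> f) = k" "f \<in> Arr C" "g \<in> Arr C" "h \<in> Arr C" "x \<in> Arr C" "Cod C f = Dom C g"
   "Cod C g = Dom C h" "Cod C x = Dom C f" shows "h \<cdot> (g \<cdot> (f \<cdot> x)) = k \<cdot> x"
proof -
  have gf: "g \<cdot> f \<in> Arr C" "Dom C (g \<cdot> f) = Dom C f" "Cod C (g \<cdot> f) = Cod C g"
    using a(2,3,6) by (rule arr_comp dom_comp cod_comp)+
  have 1: "(h \<cdot> (g \<cdot> f)) \<cdot> x = h \<cdot> ((g \<cdot> f) \<cdot> x)"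
    by (rule assoc[OF a(5) gf(1) a(4)]) (simp_all only: gf a(7) a(8))
  have 2: "(g \<cdot> f) \<cdot> x = g \<cdot> (f \<cdot> x)" by (rule assoc) (fact a)+
  have 3: "(h \<cdot> (g \<cdot> f)) \<cdot> x = k \<cdot> x" using a(1) by (rule arg_cong[where f="\<lambda>z. z \<cdot> x"])
  have 4: "h \<cdot> (g \<cdot> (f \<cdot> x)) = h \<cdot> ((g \<cdot> f) \<cdot> x)" using 2[symmetric] by (rule arg_cong[where f="\<lambda>z. h \<cdot> z"])
  show ?thesis by (rule trans[OF 4 trans[OF 1[symmetric] 3]])
qed

lemma ex1_eq: "\<exists>!x. P x \<Longrightarrow> P a \<Longrightarrow> P b \<Longrightarrow> a = b" by blast

lemma prod_ext: "product C X Y P p1 p2 \<Longrightarrow> hom C a W P \<Longrightarrow> hom C b W P \<Longrightarrow>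
   p1 \<cdot> a = p1 \<cdot> b \<Longrightarrow> p2 \<cdot> a = p2 \<cdot> b \<Longrightarrow> a = b"
proof -
  assume a: "product C X Y P p1 p2" "hom C a W P" "hom C b W P" "p1 \<cdot> a = p1 \<cdot> b" "p2 \<cdot> a = p2 \<cdot> b"
  have h: "hom C p1 P X" "hom C p2 P Y" using a(1) unfolding product_def by auto
  have "hom C (p1 \<cdot> a) W X" "hom C (p2 \<cdot> a) W Y" using comp_hom[OF a(2) h(1)] comp_hom[OF a(2) h(2)] by auto
  hence "\<exists>!h. hom C h W P \<and> p1 \<cdot> h = p1 \<cdot> a \<and> p2 \<cdot> h = p2 \<cdot> a"
    using a(1) unfolding product_def by blast
  thus "a = b" by (rule ex1_eq) (use a in auto)
qed

lemma prod_ex: "product C X Y P p1 p2 \<Longrightarrow> hom C a W X \<Longrightarrow> hom C b W Y \<Longrightarrow>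
   \<exists>h. hom C h W P \<and> p1 \<cdot> h = a \<and> p2 \<cdot> h = b"
  unfolding product_def by blast

lemma pb_ex: "pullback C f g p q \<Longrightarrow> hom C a W (Dom C f) \<Longrightarrow> hom C b W (Dom C g) \<Longrightarrow>
   f \<cdot> a = g \<cdot> b \<Longrightarrow> \<exists>h. hom C h W (Dom C p) \<and> p \<cdot> h = a \<and> q \<cdot> h = b"
  unfolding pullback_def by blast

lemma pb_ext: assumes "pullback C f g p q" "hom C h1 W (Dom C p)" "hom C h2 W (Dom C p)"
  "p \<cdot> h1 = p \<cdot> h2" "q \<cdot> h1 = q \<cdot> h2" shows "h1 = h2"
proof -
  have pb: "hom C p (Dom C p) (Dom C f)" "hom C q (Dom C p) (Dom C g)" "f \<cdot> p = g \<cdot> q"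
    "f \<in> Arr C" "g \<in> Arr C" "Cod C f = Cod C g"
    using assms(1) unfolding pullback_def by auto
  have "(f \<cdot> p) \<cdot> h1 = (g \<cdot> q) \<cdot> h1" using pb(3) by (rule arg_cong[where f="\<lambda>z. z \<cdot> h1"])
  hence "f \<cdot> (p \<cdot> h1) = g \<cdot> (q \<cdot> h1)"
    using pb(1,2,4,5,6) assms(2) by (simp add: hom_def)
  moreover have "hom C (p \<cdot> h1) W (Dom C f)" "hom C (q \<cdot> h1) W (Dom C g)"
    using pb assms(2) comp_hom by auto
  ultimately have "\<exists>!h. hom C h W (Dom C p) \<and> p \<cdot> h = p \<cdot> h1 \<and> q \<cdot> h = q \<cdot> h1"
    using assms(1) unfolding pullback_def by blast
  thus ?thesis by (rule ex1_eq) (use assms(2-5) in auto)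
qed

lemma orth: assumes re: "regular_epi C e" and mo: "mono C m" and ha: "hom C a (Dom C e) (Dom C m)"
  and hb: "hom C b (Cod C e) (Cod C m)" and sq: "m \<cdot> a = b \<cdot> e"
  shows "\<exists>k. hom C k (Cod C e) (Dom C m) \<and> m \<cdot> k = b"
proof -
  obtain u v where co: "coequalizer C u v e" using re unfolding regular_epi_def by blast
  have u: "u \<in> Arr C" "v \<in> Arr C" "e \<in> Arr C" "Dom C u = Dom C v" "Cod C u = Cod C v"
    "Dom C e = Cod C u" "e \<cdot> u = e \<cdot> v"
    using co unfolding coequalizer_def by auto
  have mm: "m \<in> Arr C" using mo unfolding mono_def by blast
  have aA: "a \<in> Arr C" "Dom C a = Dom C e" "Cod C a = Dom C m" using ha unfolding hom_def by auto
  have bA: "b \<in> Arr C" "Dom C b = Cod C e" "Cod C b = Cod C m" using hb unfolding hom_def by auto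
  have c1: "(m \<cdot> a) \<cdot> u = m \<cdot> (a \<cdot> u)" by (rule assoc) (use u aA mm in auto)
  have c2: "(m \<cdot> a) \<cdot> v = m \<cdot> (a \<cdot> v)" by (rule assoc) (use u aA mm in auto)
  have c3: "(b \<cdot> e) \<cdot> u = b \<cdot> (e \<cdot> u)" by (rule assoc) (use u bA in auto)
  have c4: "(b \<cdot> e) \<cdot> v = b \<cdot> (e \<cdot> v)" by (rule assoc) (use u bA in auto)
  have "m \<cdot> (a \<cdot> u) = m \<cdot> (a \<cdot> v)"
    using c1 c2 c3 c4 sq u(7) by metis
  hence auv: "a \<cdot> u = a \<cdot> v"
    using mo u aA unfolding mono_def by (auto simp del: assoc)
  have "hom C a (Cod C u) (Dom C m)" using ha u by simp
  then obtain k where k: "hom C k (Cod C e) (Dom C m)" "k \<cdot> e = a"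
    using co auv unfolding coequalizer_def by blast
  have kA: "k \<in> Arr C" "Dom C k = Cod C e" "Cod C k = Dom C m" using k unfolding hom_def by auto
  have c5: "(m \<cdot> k) \<cdot> e = m \<cdot> (k \<cdot> e)" by (rule assoc) (use u kA mm in auto)
  have h: "(m \<cdot> k) \<cdot> e = b \<cdot> e" using c5 k(2) sq by simp
  have "m \<cdot> k = b"
  proof -
    have hmk: "hom C (m \<cdot> k) (Cod C e) (Cod C m)" using kA mm unfolding hom_def by simp
    have "hom C (b \<cdot> e) (Cod C u) (Cod C m)" using bA u unfolding hom_def by simp
    moreover have "(b \<cdot> e) \<cdot> u = (b \<cdot> e) \<cdot> v" using c3 c4 u(7) by simp
    ultimately have "\<exists>!k. hom C k (Cod C e) (Cod C m) \<and> k \<cdot> e = b \<cdot> e"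
      using co unfolding coequalizer_def by blast
    thus ?thesis by (rule ex1_eq) (use hmk h hb in auto)
  qed
  thus ?thesis using k by blast
qed

lemma mono_pb: assumes "pullback C F m mu nu" "mono C m" shows "mono C mu"
proof -
  have pb: "hom C mu (Dom C mu) (Dom C F)" "hom C nu (Dom C mu) (Dom C m)" "F \<cdot> mu = m \<cdot> nu"
    "F \<in> Arr C" "m \<in> Arr C"
    using assms(1) unfolding pullback_def by auto
  show ?thesis unfolding mono_def
  proof (intro conjI allI impI)
    show "mu \<in> Arr C" using pb unfolding hom_def by blast
    fix g h assume a: "g \<in> Arr C \<and> h \<in> Arr C \<and> Cod C g = Dom C mu \<and> Cod C h = Dom C mu \<and>
        Dom C g = Dom C h \<and> mu \<cdot> g = mu \<cdot> h"
    have 1: "(F \<cdot> mu) \<cdot> g = (F \<cdot> mu) \<cdot> h" using pb(1,2,4,5) a by (simp add: hom_def)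
    have "(m \<cdot> nu) \<cdot> g = (m \<cdot> nu) \<cdot> h" using 1 unfolding pb(3) .
    hence "m \<cdot> (nu \<cdot> g) = m \<cdot> (nu \<cdot> h)"
      using a pb(1,2,4,5) by (simp add: hom_def)
    hence "nu \<cdot> g = nu \<cdot> h" using assms(2) a pb unfolding mono_def hom_def by simp
    thus "g = h" using pb_ext[OF assms(1), of g "Dom C g" h] a by (simp add: hom_def)
  qed
qed

lemma iso_inv: "iso C f \<Longrightarrow> \<exists>i. hom C i (Cod C f) (Dom C f) \<and> f \<cdot> i = Id C (Cod C f)"
  unfolding iso_def by blast

end


context rcat begin

lemma main:
  assumes reg: "regular_category C"
    and fib: "fibrational C \<Sigma>"
    and mal: "sigma_maltsev C \<Sigma>"
    and "X \<in> Obj C" and "Y \<in> Obj C"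
    and hf: "hom C f X Y" and "regular_epi C f"
    and sr: "sigma_relation C \<Sigma> X S d0 d1 s0"
    and di: "direct_image_data C f Y S d0 d1 P \<pi>1 \<pi>2 I e m"
  shows "\<exists>\<phi> X0 a1 p1 p2 Y0 a2. hom C \<phi> X0 I \<and> hom C p1 X0 Y0 \<and> hom C p2 X0 S \<and> hom C a1 Y0 S \<and> hom C a2 Y0 X
     \<and> pullback C (f \<cdot> d1) f a1 a2 \<and> pullback C a2 d0 p1 p2
     \<and> \<pi>1 \<cdot> (m \<cdot> \<phi>) = f \<cdot> (d0 \<cdot> (a1 \<cdot> p1)) \<and> \<pi>2 \<cdot> (m \<cdot> \<phi>) = f \<cdot> (d1 \<cdot> p2)"
proof -
  have hd: "hom C d0 S X" "hom C d1 S X" "hom C s0 X S" "d0 \<cdot> s0 = Id C X" "d1 \<cdot> s0 = Id C X"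
    "(d0, s0) \<in> \<Sigma>"
    using sr unfolding sigma_relation_def relation_def reflexive_with_def by auto
  have hi: "product C Y Y P \<pi>1 \<pi>2" "hom C e S I" "regular_epi C e" "hom C m I P" "mono C m"
     "\<pi>1 \<cdot> (m \<cdot> e) = f \<cdot> d0" "\<pi>2 \<cdot> (m \<cdot> e) = f \<cdot> d1"
    using di unfolding direct_image_data_def by auto
  have hp: "hom C \<pi>1 P Y" "hom C \<pi>2 P Y" using hi(1) unfolding product_def by auto
  have fc: "\<And>a b. a \<in> Arr C \<Longrightarrow> b \<in> Arr C \<Longrightarrow> Cod C a = Cod C b \<Longrightarrow> \<exists>p q. pullback C a b p q"
    using reg unfolding regular_category_def finitely_complete_def by blast
  have e1: "\<And>x. x \<in> Arr C \<Longrightarrow> Cod C x = S \<Longrightarrow> \<pi>1 \<cdot> (m \<cdot> (e \<cdot> x)) = f \<cdot> (d0 \<cdot> x)"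
    proof -
    fix x assume x: "x \<in> Arr C" "Cod C x = S"
    have "\<pi>1 \<cdot> (m \<cdot> (e \<cdot> x)) = (f \<cdot> d0) \<cdot> x"
      by (rule assoc_ext3[OF hi(6)]) (insert hi hp hd hf x, auto simp: hom_def)
    thus "\<pi>1 \<cdot> (m \<cdot> (e \<cdot> x)) = f \<cdot> (d0 \<cdot> x)" using hd hf x by (simp add: hom_def)
  qed
  have e2: "\<And>x. x \<in> Arr C \<Longrightarrow> Cod C x = S \<Longrightarrow> \<pi>2 \<cdot> (m \<cdot> (e \<cdot> x)) = f \<cdot> (d1 \<cdot> x)"
    proof -
    fix x assume x: "x \<in> Arr C" "Cod C x = S"
    have "\<pi>2 \<cdot> (m \<cdot> (e \<cdot> x)) = (f \<cdot> d1) \<cdot> x"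
      by (rule assoc_ext3[OF hi(7)]) (insert hi hp hd hf x, auto simp: hom_def)
    thus "\<pi>2 \<cdot> (m \<cdot> (e \<cdot> x)) = f \<cdot> (d1 \<cdot> x)" using hd hf x by (simp add: hom_def)
  qed
  have r0: "\<And>x. x \<in> Arr C \<Longrightarrow> Cod C x = X \<Longrightarrow> d0 \<cdot> (s0 \<cdot> x) = x"
    by (subst assoc_ext[OF hd(4)]) (insert hd, auto simp: hom_def)
  have r1: "\<And>x. x \<in> Arr C \<Longrightarrow> Cod C x = X \<Longrightarrow> d1 \<cdot> (s0 \<cdot> x) = x"
    by (subst assoc_ext[OF hd(5)]) (insert hd, auto simp: hom_def)
  obtain a1 a2 where pY: "pullback C (f \<cdot> d1) f a1 a2"
    using fc[of "f \<cdot> d1" f] hf hd by (auto simp: hom_def)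
  define Y0 where "Y0 = Dom C a1"
  have ha: "hom C a1 Y0 S" "hom C a2 Y0 X" "f \<cdot> (d1 \<cdot> a1) = f \<cdot> a2"
    using pY hf hd unfolding pullback_def Y0_def by (auto simp: hom_def)
  obtain t where ht: "hom C t X Y0" "a1 \<cdot> t = s0" "a2 \<cdot> t = Id C X"
  proof -
    have eq: "(f \<cdot> d1) \<cdot> s0 = f \<cdot> Id C X" using hd hf by (simp add: hom_def)
    have h1: "hom C s0 X (Dom C (f \<cdot> d1))" using hd hf by (simp add: hom_def)
    have h2: "hom C (Id C X) X (Dom C f)" using id_hom[OF assms(4)] hf by (simp add: hom_def)
    show ?thesis using pb_ex[OF pY h1 h2 eq] that Y0_def by blast
  qed
  have t1: "\<And>x. x \<in> Arr C \<Longrightarrow> Cod C x = X \<Longrightarrow> a1 \<cdot> (t \<cdot> x) = s0 \<cdot> x"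
    by (rule assoc_ext[OF ht(2)]) (insert ht ha, auto simp: hom_def)
  obtain p1 p2 where pX: "pullback C a2 d0 p1 p2"
    using fc[of a2 d0] ha hd by (auto simp: hom_def)
  define X0 where "X0 = Dom C p1"
  have hpx: "hom C p1 X0 Y0" "hom C p2 X0 S" "a2 \<cdot> p1 = d0 \<cdot> p2"
    using pX ha hd unfolding pullback_def X0_def by (auto simp: hom_def)
  obtain s' where hs: "hom C s' Y0 X0" "p1 \<cdot> s' = Id C Y0" "p2 \<cdot> s' = s0 \<cdot> a2"
  proof -
    have eq: "a2 \<cdot> Id C Y0 = d0 \<cdot> (s0 \<cdot> a2)" using ha hd r0 by (simp add: hom_def)
    have h1: "hom C (Id C Y0) Y0 (Dom C a2)" using ha id_hom[of Y0] dom_obj[of a1] by (simp add: hom_def)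
    have h2: "hom C (s0 \<cdot> a2) Y0 (Dom C d0)" using ha hd by (simp add: hom_def)
    show ?thesis using pb_ex[OF pX h1 h2 eq] that X0_def by blast
  qed
  obtain tb where htb: "hom C tb S X0" "p1 \<cdot> tb = t \<cdot> d0" "p2 \<cdot> tb = Id C S"
  proof -
    have "a2 \<cdot> (t \<cdot> d0) = Id C X \<cdot> d0" by (rule assoc_ext[OF ht(3)]) (insert ha hd ht, auto simp: hom_def)
    hence eq: "a2 \<cdot> (t \<cdot> d0) = d0 \<cdot> Id C S" using hd by (simp add: hom_def)
    have h1: "hom C (t \<cdot> d0) S (Dom C a2)" using ha hd ht by (simp add: hom_def)
    have h2: "hom C (Id C S) S (Dom C d0)" using hd id_hom[of S] dom_obj[of d0] by (simp add: hom_def)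
    show ?thesis using pb_ex[OF pX h1 h2 eq] that X0_def by blast
  qed
  have jee: "jointly_extremally_epic C s' tb"
  proof -
    have se: "split_epi C a2 t" using ha ht unfolding split_epi_def unfolding hom_def by auto
    have c: "Cod C a2 = Cod C d0" using ha hd by (simp add: hom_def)
    have h1: "hom C s' (Dom C a2) (Dom C p1)" using hs ha X0_def by (simp add: hom_def)
    have h2: "p1 \<cdot> s' = Id C (Dom C a2)" using hs ha by (simp add: hom_def)
    have h3: "hom C tb (Dom C d0) (Dom C p1)" using htb hd X0_def by (simp add: hom_def)
    have h4: "p2 \<cdot> tb = Id C (Dom C d0)" using htb hd by (simp add: hom_def)
    show ?thesis using mal[unfolded sigma_maltsev_def, rule_format, of d0 s0 a2 t p1 p2 s' tb]
      hd(6) se c pX h1 h2 hs(3) h3 htb(2) h4 by blast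
  qed
  obtain \<Phi> where hPhi: "hom C \<Phi> X0 P" "\<pi>1 \<cdot> \<Phi> = f \<cdot> (d0 \<cdot> (a1 \<cdot> p1))" "\<pi>2 \<cdot> \<Phi> = f \<cdot> (d1 \<cdot> p2)"
    using prod_ex[OF hi(1), of "f \<cdot> (d0 \<cdot> (a1 \<cdot> p1))" X0 "f \<cdot> (d1 \<cdot> p2)"] hf hd ha hpx
    by (auto simp: hom_def)
  obtain mu nu where pM: "pullback C \<Phi> m mu nu"
    using fc[of \<Phi> m] hPhi hi by (auto simp: hom_def)
  define M where "M = Dom C mu"
  have hmu: "hom C mu M X0" "hom C nu M I" "\<Phi> \<cdot> mu = m \<cdot> nu" "mono C mu"
    using pM hPhi hi mono_pb[OF pM hi(5)] unfolding pullback_def M_def by (auto simp: hom_def)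
  have Ps: "\<Phi> \<cdot> s' = m \<cdot> (e \<cdot> a1)"
  proof (rule prod_ext[OF hi(1)])
    show "hom C (\<Phi> \<cdot> s') Y0 P" "hom C (m \<cdot> (e \<cdot> a1)) Y0 P"
      using hPhi hs hi ha by (auto simp: hom_def)
    have "\<pi>1 \<cdot> (\<Phi> \<cdot> s') = (\<pi>1 \<cdot> \<Phi>) \<cdot> s'" using hPhi(1) hs(1) hp by (simp add: hom_def)
    also have "\<dots> = f \<cdot> (d0 \<cdot> a1)" using hPhi hs hp hf hd ha hpx by (simp add: hom_def)
    finally show "\<pi>1 \<cdot> (\<Phi> \<cdot> s') = \<pi>1 \<cdot> (m \<cdot> (e \<cdot> a1))" using e1 ha by (simp add: hom_def)
    have "\<pi>2 \<cdot> (\<Phi> \<cdot> s') = (\<pi>2 \<cdot> \<Phi>) \<cdot> s'" using hPhi(1) hs(1) hp by (simp add: hom_def)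
    also have "\<dots> = f \<cdot> (d1 \<cdot> (s0 \<cdot> a2))" using hPhi hs hp hf hd ha hpx by (simp add: hom_def)
    also have "\<dots> = f \<cdot> a2" using r1 ha by (simp add: hom_def)
    finally show "\<pi>2 \<cdot> (\<Phi> \<cdot> s') = \<pi>2 \<cdot> (m \<cdot> (e \<cdot> a1))" using e2 ha by (simp add: hom_def)
  qed
  have Pt: "\<Phi> \<cdot> tb = m \<cdot> e"
  proof (rule prod_ext[OF hi(1)])
    show "hom C (\<Phi> \<cdot> tb) S P" "hom C (m \<cdot> e) S P"
      using hPhi htb hi by (auto simp: hom_def)
    have "\<pi>1 \<cdot> (\<Phi> \<cdot> tb) = (\<pi>1 \<cdot> \<Phi>) \<cdot> tb" using hPhi(1) htb(1) hp by (simp add: hom_def)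
    also have "\<dots> = f \<cdot> (d0 \<cdot> (a1 \<cdot> (t \<cdot> d0)))" using hPhi htb hp hf hd ha hpx by (simp add: hom_def)
    also have "\<dots> = f \<cdot> d0" using t1 r0 hd by (simp add: hom_def)
    finally show "\<pi>1 \<cdot> (\<Phi> \<cdot> tb) = \<pi>1 \<cdot> (m \<cdot> e)" using hi by simp
    have "\<pi>2 \<cdot> (\<Phi> \<cdot> tb) = (\<pi>2 \<cdot> \<Phi>) \<cdot> tb" using hPhi(1) htb(1) hp by (simp add: hom_def)
    also have "\<dots> = f \<cdot> d1" using hPhi htb hp hf hd ha hpx by (simp add: hom_def)
    finally show "\<pi>2 \<cdot> (\<Phi> \<cdot> tb) = \<pi>2 \<cdot> (m \<cdot> e)" using hi by simp
  qed
  obtain s2 where s2: "hom C s2 Y0 M" "mu \<cdot> s2 = s'"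
  proof -
    have h1: "hom C s' Y0 (Dom C \<Phi>)" using hs hPhi by (simp add: hom_def)
    have h2: "hom C (e \<cdot> a1) Y0 (Dom C m)" using hi ha by (simp add: hom_def)
    show ?thesis using pb_ex[OF pM h1 h2 Ps] that M_def by blast
  qed
  obtain tb2 where tb2: "hom C tb2 S M" "mu \<cdot> tb2 = tb"
  proof -
    have h1: "hom C tb S (Dom C \<Phi>)" using htb hPhi by (simp add: hom_def)
    have h2: "hom C e S (Dom C m)" using hi by (simp add: hom_def)
    show ?thesis using pb_ex[OF pM h1 h2 Pt] that M_def by blast
  qed
  have "iso C mu"
  proof -
    have c: "Cod C mu = Cod C s'" using hmu hs by (simp add: hom_def)
    have h1: "hom C s2 (Dom C s') (Dom C mu)" using s2 hs hmu by (simp add: hom_def)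
    have h2: "hom C tb2 (Dom C tb) (Dom C mu)" using tb2 htb hmu by (simp add: hom_def)
    show ?thesis using jee[unfolded jointly_extremally_epic_def, THEN conjunct2, THEN conjunct2, THEN conjunct2, rule_format, of mu s2 tb2]
      hmu(4) c h1 h2 s2(2) tb2(2) by blast
  qed
  then obtain mi where mi0: "hom C mi (Cod C mu) (Dom C mu)" "mu \<cdot> mi = Id C (Cod C mu)"
    using iso_inv by blast
  have mi: "hom C mi X0 M" "mu \<cdot> mi = Id C X0" using mi0 hmu(1) M_def by (simp_all add: hom_def)
  have "m \<cdot> (nu \<cdot> mi) = \<Phi>"
  proof -
    have "m \<cdot> (nu \<cdot> mi) = (m \<cdot> nu) \<cdot> mi" using hi hmu mi by (simp add: hom_def)
    also have "\<dots> = (\<Phi> \<cdot> mu) \<cdot> mi" using hmu by simp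
    also have "\<dots> = \<Phi> \<cdot> (mu \<cdot> mi)" using hPhi(1) hmu(1) mi(1) by (simp add: hom_def)
    finally show ?thesis using mi hPhi(1) by (simp add: hom_def)
  qed
  moreover have "hom C (nu \<cdot> mi) X0 I" using hmu mi by (simp add: hom_def)
  ultimately show ?thesis
    apply -
    apply (rule exI[of _ "nu \<cdot> mi"], rule exI[of _ X0], rule exI[of _ a1], rule exI[of _ p1],
      rule exI[of _ p2], rule exI[of _ Y0], rule exI[of _ a2])
    using hPhi(2,3) hpx(1,2) ha(1,2) pY pX by simp
qed

end


context rcat begin

lemma final:
  fixes \<Sigma> :: "('a \<times> 'a) set"
  assumes reg: "regular_category C"
    and fib: "fibrational C \<Sigma>"
    and mal: "sigma_maltsev C \<Sigma>"
    and ox: "X \<in> Obj C" and oy: "Y \<in> Obj C"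
    and hf: "hom C f X Y" and ref: "regular_epi C f"
    and sr: "sigma_relation C \<Sigma> X S d0 d1 s0"
    and di: "direct_image_data C f Y S d0 d1 P \<pi>1 \<pi>2 I e m"
  shows "relation C Y I (\<pi>1 \<cdot> m) (\<pi>2 \<cdot> m) \<and>
         transitive_rel C Y I (\<pi>1 \<cdot> m) (\<pi>2 \<cdot> m) \<and>
         (sigma_equivalence_relation C \<Sigma> X S d0 d1 s0 \<longrightarrow>
            equivalence_rel C Y I (\<pi>1 \<cdot> m) (\<pi>2 \<cdot> m))"
proof -
  have hd: "hom C d0 S X" "hom C d1 S X" "hom C s0 X S" "d0 \<cdot> s0 = Id C X" "d1 \<cdot> s0 = Id C X"
    using sr unfolding sigma_relation_def relation_def reflexive_with_def by auto
  have hi: "product C Y Y P \<pi>1 \<pi>2" "hom C e S I" "regular_epi C e" "hom C m I P" "mono C m"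
     "\<pi>1 \<cdot> (m \<cdot> e) = f \<cdot> d0" "\<pi>2 \<cdot> (m \<cdot> e) = f \<cdot> d1"
    using di unfolding direct_image_data_def by auto
  have hp: "hom C \<pi>1 P Y" "hom C \<pi>2 P Y" using hi(1) unfolding product_def by auto
  have fc: "\<And>a b. a \<in> Arr C \<Longrightarrow> b \<in> Arr C \<Longrightarrow> Cod C a = Cod C b \<Longrightarrow> \<exists>p q. pullback C a b p q"
    using reg unfolding regular_category_def finitely_complete_def by blast
  have rstab: "\<And>a b p q. pullback C a b p q \<Longrightarrow> regular_epi C a \<Longrightarrow> regular_epi C q"
    using reg unfolding regular_category_def by blast
  have e1: "\<And>x. x \<in> Arr C \<Longrightarrow> Cod C x = S \<Longrightarrow> \<pi>1 \<cdot> (m \<cdot> (e \<cdot> x)) = f \<cdot> (d0 \<cdot> x)"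
  proof -
    fix x assume x: "x \<in> Arr C" "Cod C x = S"
    have "\<pi>1 \<cdot> (m \<cdot> (e \<cdot> x)) = (f \<cdot> d0) \<cdot> x"
      by (rule assoc_ext3[OF hi(6)]) (insert hi hp hd hf x, auto simp: hom_def)
    thus "\<pi>1 \<cdot> (m \<cdot> (e \<cdot> x)) = f \<cdot> (d0 \<cdot> x)" using hd hf x by (simp add: hom_def)
  qed
  have e2: "\<And>x. x \<in> Arr C \<Longrightarrow> Cod C x = S \<Longrightarrow> \<pi>2 \<cdot> (m \<cdot> (e \<cdot> x)) = f \<cdot> (d1 \<cdot> x)"
  proof -
    fix x assume x: "x \<in> Arr C" "Cod C x = S"
    have "\<pi>2 \<cdot> (m \<cdot> (e \<cdot> x)) = (f \<cdot> d1) \<cdot> x"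
      by (rule assoc_ext3[OF hi(7)]) (insert hi hp hd hf x, auto simp: hom_def)
    thus "\<pi>2 \<cdot> (m \<cdot> (e \<cdot> x)) = f \<cdot> (d1 \<cdot> x)" using hd hf x by (simp add: hom_def)
  qed
  have mm: "m \<in> Arr C" using hi(4) unfolding hom_def by blast
  have rel: "relation C Y I (\<pi>1 \<cdot> m) (\<pi>2 \<cdot> m)"
    unfolding relation_def
  proof (intro conjI allI impI)
    show "hom C (\<pi>1 \<cdot> m) I Y" "hom C (\<pi>2 \<cdot> m) I Y" using hp hi by (auto simp: hom_def)
    fix P' p1' p2' h assume a: "product C Y Y P' p1' p2' \<and> hom C h I P' \<and> p1' \<cdot> h = \<pi>1 \<cdot> m \<and> p2' \<cdot> h = \<pi>2 \<cdot> m"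
    have hp': "hom C p1' P' Y" "hom C p2' P' Y" using a unfolding product_def by auto
    show "mono C h" unfolding mono_def
    proof (intro conjI allI impI)
      show "h \<in> Arr C" using a unfolding hom_def by blast
      fix g k assume b: "g \<in> Arr C \<and> k \<in> Arr C \<and> Cod C g = Dom C h \<and> Cod C k = Dom C h \<and>
        Dom C g = Dom C k \<and> h \<cdot> g = h \<cdot> k"
      have hh: "h \<in> Arr C" "Dom C h = I" "Cod C h = P'" and A: "p1' \<cdot> h = \<pi>1 \<cdot> m" "p2' \<cdot> h = \<pi>2 \<cdot> m"
        using a unfolding hom_def by auto
      have gk: "g \<in> Arr C" "k \<in> Arr C" "Cod C g = I" "Cod C k = I" "Dom C g = Dom C k" and hgk: "h \<cdot> g = h \<cdot> k"
        using b hh by auto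
      have mA: "m \<in> Arr C" "Dom C m = I" "Cod C m = P" using hi(4) unfolding hom_def by auto
      have pA: "\<pi>1 \<in> Arr C" "Dom C \<pi>1 = P" "\<pi>2 \<in> Arr C" "Dom C \<pi>2 = P" using hp unfolding hom_def by auto
      have pA': "p1' \<in> Arr C" "Dom C p1' = P'" "p2' \<in> Arr C" "Dom C p2' = P'" using hp' unfolding hom_def by auto
      have "m \<cdot> g = m \<cdot> k"
      proof (rule prod_ext[OF hi(1)])
        show "hom C (m \<cdot> g) (Dom C g) P" "hom C (m \<cdot> k) (Dom C g) P" using gk mA by (auto simp: hom_def)
        have "\<pi>1 \<cdot> (m \<cdot> g) = (\<pi>1 \<cdot> m) \<cdot> g" using gk mA pA by simp
        also have "\<dots> = (p1' \<cdot> h) \<cdot> g" using A(1) by simp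
        also have "\<dots> = p1' \<cdot> (h \<cdot> g)" using gk hh pA' by simp
        also have "\<dots> = p1' \<cdot> (h \<cdot> k)" using hgk by simp
        also have "\<dots> = (p1' \<cdot> h) \<cdot> k" using gk hh pA' by simp
        also have "\<dots> = (\<pi>1 \<cdot> m) \<cdot> k" using A(1) by simp
        also have "\<dots> = \<pi>1 \<cdot> (m \<cdot> k)" using gk mA pA by simp
        finally show "\<pi>1 \<cdot> (m \<cdot> g) = \<pi>1 \<cdot> (m \<cdot> k)" .
        have "\<pi>2 \<cdot> (m \<cdot> g) = (\<pi>2 \<cdot> m) \<cdot> g" using gk mA pA by simp
        also have "\<dots> = (p2' \<cdot> h) \<cdot> g" using A(2) by simp
        also have "\<dots> = p2' \<cdot> (h \<cdot> g)" using gk hh pA' by simp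
        also have "\<dots> = p2' \<cdot> (h \<cdot> k)" using hgk by simp
        also have "\<dots> = (p2' \<cdot> h) \<cdot> k" using gk hh pA' by simp
        also have "\<dots> = (\<pi>2 \<cdot> m) \<cdot> k" using A(2) by simp
        also have "\<dots> = \<pi>2 \<cdot> (m \<cdot> k)" using gk mA pA by simp
        finally show "\<pi>2 \<cdot> (m \<cdot> g) = \<pi>2 \<cdot> (m \<cdot> k)" .
      qed
      thus "g = k" using hi(5) gk mA unfolding mono_def by auto
    qed
  qed
  obtain \<phi> X0 a1 p1 p2 Y0 a2 where K: "hom C \<phi> X0 I" "hom C p1 X0 Y0" "hom C p2 X0 S" "hom C a1 Y0 S" "hom C a2 Y0 X"
     "pullback C (f \<cdot> d1) f a1 a2" "pullback C a2 d0 p1 p2"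
     "\<pi>1 \<cdot> (m \<cdot> \<phi>) = f \<cdot> (d0 \<cdot> (a1 \<cdot> p1))" "\<pi>2 \<cdot> (m \<cdot> \<phi>) = f \<cdot> (d1 \<cdot> p2)"
    using main[OF assms] by blast
  have tr: "transitive_rel C Y I (\<pi>1 \<cdot> m) (\<pi>2 \<cdot> m)"
    unfolding transitive_rel_def
  proof (intro allI impI)
    fix p q assume pb: "pullback C (\<pi>2 \<cdot> m) (\<pi>1 \<cdot> m) p q"
    define Q where "Q = Dom C p"
    have hpq: "hom C p Q I" "hom C q Q I" "(\<pi>2 \<cdot> m) \<cdot> p = (\<pi>1 \<cdot> m) \<cdot> q"
      using pb hp hi unfolding pullback_def Q_def by (auto simp: hom_def)
    obtain v1 \<epsilon>1 where pb1: "pullback C e p v1 \<epsilon>1"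
      using fc[of e p] hi hpq by (auto simp: hom_def)
    define Q1 where "Q1 = Dom C v1"
    have h1: "hom C v1 Q1 S" "hom C \<epsilon>1 Q1 Q" "e \<cdot> v1 = p \<cdot> \<epsilon>1" "regular_epi C \<epsilon>1"
      using pb1 hi hpq rstab[OF pb1 hi(3)] unfolding pullback_def Q1_def by (auto simp: hom_def)
    obtain v2 \<epsilon>2 where pb2: "pullback C e (q \<cdot> \<epsilon>1) v2 \<epsilon>2"
      using fc[of e "q \<cdot> \<epsilon>1"] hi hpq h1 by (auto simp: hom_def)
    define Q2 where "Q2 = Dom C v2"
    have h2: "hom C v2 Q2 S" "hom C \<epsilon>2 Q2 Q1" "e \<cdot> v2 = q \<cdot> (\<epsilon>1 \<cdot> \<epsilon>2)" "regular_epi C \<epsilon>2"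
    proof -
      have "hom C v2 (Dom C v2) (Dom C e)" "hom C \<epsilon>2 (Dom C v2) (Dom C (q \<cdot> \<epsilon>1))" "e \<cdot> v2 = (q \<cdot> \<epsilon>1) \<cdot> \<epsilon>2"
        using pb2 unfolding pullback_def by auto
      thus "hom C v2 Q2 S" "hom C \<epsilon>2 Q2 Q1" "e \<cdot> v2 = q \<cdot> (\<epsilon>1 \<cdot> \<epsilon>2)"
        using hi hpq h1 Q2_def by (auto simp: hom_def)
      show "regular_epi C \<epsilon>2" using rstab[OF pb2 hi(3)] .
    qed
    have ev1: "e \<cdot> (v1 \<cdot> \<epsilon>2) = p \<cdot> (\<epsilon>1 \<cdot> \<epsilon>2)"
    proof -
      have "(e \<cdot> v1) \<cdot> \<epsilon>2 = (p \<cdot> \<epsilon>1) \<cdot> \<epsilon>2" using h1(3) by simp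
      thus ?thesis using hi(2) h1(1,2) h2(1,2) hpq(1,2) by (simp add: hom_def)
    qed
    have P1: "\<pi>1 \<cdot> (m \<cdot> (p \<cdot> (\<epsilon>1 \<cdot> \<epsilon>2))) = f \<cdot> (d0 \<cdot> (v1 \<cdot> \<epsilon>2))"
      using e1[of "v1 \<cdot> \<epsilon>2"] ev1 h1(1,2) h2(1,2) by (simp add: hom_def)
    have P2: "\<pi>2 \<cdot> (m \<cdot> (q \<cdot> (\<epsilon>1 \<cdot> \<epsilon>2))) = f \<cdot> (d1 \<cdot> v2)"
      using e2[of v2] h2 by (simp add: hom_def)
    have mid: "\<pi>2 \<cdot> (m \<cdot> (p \<cdot> (\<epsilon>1 \<cdot> \<epsilon>2))) = \<pi>1 \<cdot> (m \<cdot> (q \<cdot> (\<epsilon>1 \<cdot> \<epsilon>2)))"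
    proof -
      have "((\<pi>2 \<cdot> m) \<cdot> p) \<cdot> (\<epsilon>1 \<cdot> \<epsilon>2) = ((\<pi>1 \<cdot> m) \<cdot> q) \<cdot> (\<epsilon>1 \<cdot> \<epsilon>2)" using hpq(3) by simp
      thus ?thesis using hi(4) hp hpq(1,2) h1(2) h2(2) by (simp add: hom_def)
    qed
    have eqY: "(f \<cdot> d1) \<cdot> (v1 \<cdot> \<epsilon>2) = f \<cdot> (d0 \<cdot> v2)"
    proof -
      have "(f \<cdot> d1) \<cdot> (v1 \<cdot> \<epsilon>2) = \<pi>2 \<cdot> (m \<cdot> (e \<cdot> (v1 \<cdot> \<epsilon>2)))"
        using e2[of "v1 \<cdot> \<epsilon>2"] hf hd h1 h2 by (simp add: hom_def)
      also have "\<dots> = \<pi>2 \<cdot> (m \<cdot> (p \<cdot> (\<epsilon>1 \<cdot> \<epsilon>2)))" using ev1 by simp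
      also have "\<dots> = \<pi>1 \<cdot> (m \<cdot> (q \<cdot> (\<epsilon>1 \<cdot> \<epsilon>2)))" using mid .
      also have "\<dots> = \<pi>1 \<cdot> (m \<cdot> (e \<cdot> v2))" using h2(3) by simp
      also have "\<dots> = f \<cdot> (d0 \<cdot> v2)" using e1[of v2] h2 by (simp add: hom_def)
      finally show ?thesis .
    qed
    obtain y where y: "hom C y Q2 Y0" "a1 \<cdot> y = v1 \<cdot> \<epsilon>2" "a2 \<cdot> y = d0 \<cdot> v2"
    proof -
      have a: "hom C (v1 \<cdot> \<epsilon>2) Q2 (Dom C (f \<cdot> d1))" using h1 h2 hd hf by (simp add: hom_def)
      have b: "hom C (d0 \<cdot> v2) Q2 (Dom C f)" using h2 hd hf by (simp add: hom_def)
      have "Dom C a1 = Y0" using K(4) unfolding hom_def by blast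
      thus ?thesis using pb_ex[OF K(6) a b eqY] that by auto
    qed
    obtain z where z: "hom C z Q2 X0" "p1 \<cdot> z = y" "p2 \<cdot> z = v2"
    proof -
      have a: "hom C y Q2 (Dom C a2)" using y K by (simp add: hom_def)
      have b: "hom C v2 Q2 (Dom C d0)" using h2 hd by (simp add: hom_def)
      have "Dom C p1 = X0" using K(2) unfolding hom_def by blast
      thus ?thesis using pb_ex[OF K(7) a b y(3)] that by auto
    qed
    obtain H where H: "hom C H Q P" "\<pi>1 \<cdot> H = (\<pi>1 \<cdot> m) \<cdot> p" "\<pi>2 \<cdot> H = (\<pi>2 \<cdot> m) \<cdot> q"
      using prod_ex[OF hi(1), of "(\<pi>1 \<cdot> m) \<cdot> p" Q "(\<pi>2 \<cdot> m) \<cdot> q"] hp hi hpq by (auto simp: hom_def)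
    have sq: "m \<cdot> (\<phi> \<cdot> z) = (H \<cdot> \<epsilon>1) \<cdot> \<epsilon>2"
    proof (rule prod_ext[OF hi(1)])
      show "hom C (m \<cdot> (\<phi> \<cdot> z)) Q2 P" "hom C ((H \<cdot> \<epsilon>1) \<cdot> \<epsilon>2) Q2 P"
        using hi K z H h1 h2 by (auto simp: hom_def)
      have "\<pi>1 \<cdot> (m \<cdot> (\<phi> \<cdot> z)) = (\<pi>1 \<cdot> (m \<cdot> \<phi>)) \<cdot> z" using hi(4) hp K(1) z(1) by (simp add: hom_def)
      also have "\<dots> = (f \<cdot> (d0 \<cdot> (a1 \<cdot> p1))) \<cdot> z" using K(8) by simp
      also have "\<dots> = f \<cdot> (d0 \<cdot> (a1 \<cdot> (p1 \<cdot> z)))" using hf hd K z by (simp add: hom_def)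
      also have "\<dots> = f \<cdot> (d0 \<cdot> (v1 \<cdot> \<epsilon>2))" using z(2) y(2) by simp
      also have "\<dots> = \<pi>1 \<cdot> (m \<cdot> (p \<cdot> (\<epsilon>1 \<cdot> \<epsilon>2)))" using P1 by simp
      also have "\<dots> = (\<pi>1 \<cdot> H) \<cdot> (\<epsilon>1 \<cdot> \<epsilon>2)" using H(2) hi hp hpq h1 h2 by (simp add: hom_def)
      also have "\<dots> = \<pi>1 \<cdot> ((H \<cdot> \<epsilon>1) \<cdot> \<epsilon>2)" using H(1) hp h1 h2 by (simp add: hom_def)
      finally show "\<pi>1 \<cdot> (m \<cdot> (\<phi> \<cdot> z)) = \<pi>1 \<cdot> ((H \<cdot> \<epsilon>1) \<cdot> \<epsilon>2)" .
      have "\<pi>2 \<cdot> (m \<cdot> (\<phi> \<cdot> z)) = (\<pi>2 \<cdot> (m \<cdot> \<phi>)) \<cdot> z" using hi(4) hp K(1) z(1) by (simp add: hom_def)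
      also have "\<dots> = (f \<cdot> (d1 \<cdot> p2)) \<cdot> z" using K(9) by simp
      also have "\<dots> = f \<cdot> (d1 \<cdot> (p2 \<cdot> z))" using hf hd K z by (simp add: hom_def)
      also have "\<dots> = f \<cdot> (d1 \<cdot> v2)" using z(3) by simp
      also have "\<dots> = \<pi>2 \<cdot> (m \<cdot> (q \<cdot> (\<epsilon>1 \<cdot> \<epsilon>2)))" using P2 by simp
      also have "\<dots> = (\<pi>2 \<cdot> H) \<cdot> (\<epsilon>1 \<cdot> \<epsilon>2)" using H(3) hi hp hpq h1 h2 by (simp add: hom_def)
      also have "\<dots> = \<pi>2 \<cdot> ((H \<cdot> \<epsilon>1) \<cdot> \<epsilon>2)" using H(1) hp h1 h2 by (simp add: hom_def)
      finally show "\<pi>2 \<cdot> (m \<cdot> (\<phi> \<cdot> z)) = \<pi>2 \<cdot> ((H \<cdot> \<epsilon>1) \<cdot> \<epsilon>2)" .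
    qed
    obtain k1 where k1: "hom C k1 Q1 I" "m \<cdot> k1 = H \<cdot> \<epsilon>1"
    proof -
      have a: "hom C (\<phi> \<cdot> z) (Dom C \<epsilon>2) (Dom C m)" using K z h2 hi by (simp add: hom_def)
      have b: "hom C (H \<cdot> \<epsilon>1) (Cod C \<epsilon>2) (Cod C m)" using H h1 h2 hi by (simp add: hom_def)
      have "Cod C \<epsilon>2 = Q1" "Dom C m = I" using h2 hi by (simp_all add: hom_def)
      thus ?thesis using orth[OF h2(4) hi(5) a b sq] that by auto
    qed
    obtain t where t: "hom C t Q I" "m \<cdot> t = H"
    proof -
      have a: "hom C k1 (Dom C \<epsilon>1) (Dom C m)" using k1 h1 hi by (simp add: hom_def)
      have b: "hom C H (Cod C \<epsilon>1) (Cod C m)" using H h1 hi by (simp add: hom_def)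
      have "Cod C \<epsilon>1 = Q" "Dom C m = I" using h1 hi by (simp_all add: hom_def)
      thus ?thesis using orth[OF h1(4) hi(5) a b k1(2)] that by auto
    qed
    have "(\<pi>1 \<cdot> m) \<cdot> t = (\<pi>1 \<cdot> m) \<cdot> p"
    proof -
      have "(\<pi>1 \<cdot> m) \<cdot> t = \<pi>1 \<cdot> (m \<cdot> t)" using hp hi t by (simp add: hom_def)
      thus ?thesis using t(2) H(2) by simp
    qed
    moreover have "(\<pi>2 \<cdot> m) \<cdot> t = (\<pi>2 \<cdot> m) \<cdot> q"
    proof -
      have "(\<pi>2 \<cdot> m) \<cdot> t = \<pi>2 \<cdot> (m \<cdot> t)" using hp hi t by (simp add: hom_def)
      thus ?thesis using t(2) H(3) by simp
    qed
    ultimately show "\<exists>t. hom C t (Dom C p) I \<and> (\<pi>1 \<cdot> m) \<cdot> t = (\<pi>1 \<cdot> m) \<cdot> p \<and> (\<pi>2 \<cdot> m) \<cdot> t = (\<pi>2 \<cdot> m) \<cdot> q"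
      using t(1) Q_def by blast
  qed
  have rf: "reflexive_rel C Y I (\<pi>1 \<cdot> m) (\<pi>2 \<cdot> m)"
  proof -
    have iy: "hom C (Id C Y) Y Y" using id_hom[OF oy] .
    obtain Hd where Hd: "hom C Hd Y P" "\<pi>1 \<cdot> Hd = Id C Y" "\<pi>2 \<cdot> Hd = Id C Y"
      using prod_ex[OF hi(1) iy iy] by blast
    have sq: "m \<cdot> (e \<cdot> s0) = Hd \<cdot> f"
    proof (rule prod_ext[OF hi(1)])
      show "hom C (m \<cdot> (e \<cdot> s0)) X P" "hom C (Hd \<cdot> f) X P" using hi hd Hd hf by (auto simp: hom_def)
      have "\<pi>1 \<cdot> (m \<cdot> (e \<cdot> s0)) = f \<cdot> (d0 \<cdot> s0)" using e1[of s0] hd by (simp add: hom_def)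
      also have "\<dots> = f" using hd(4) hf by (simp add: hom_def)
      also have "\<dots> = (\<pi>1 \<cdot> Hd) \<cdot> f" using Hd(2) hf by (simp add: hom_def)
      also have "\<dots> = \<pi>1 \<cdot> (Hd \<cdot> f)" using Hd(1) hp hf by (simp add: hom_def)
      finally show "\<pi>1 \<cdot> (m \<cdot> (e \<cdot> s0)) = \<pi>1 \<cdot> (Hd \<cdot> f)" .
      have "\<pi>2 \<cdot> (m \<cdot> (e \<cdot> s0)) = f \<cdot> (d1 \<cdot> s0)" using e2[of s0] hd by (simp add: hom_def)
      also have "\<dots> = f" using hd(5) hf by (simp add: hom_def)
      also have "\<dots> = (\<pi>2 \<cdot> Hd) \<cdot> f" using Hd(3) hf by (simp add: hom_def)
      also have "\<dots> = \<pi>2 \<cdot> (Hd \<cdot> f)" using Hd(1) hp hf by (simp add: hom_def)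
      finally show "\<pi>2 \<cdot> (m \<cdot> (e \<cdot> s0)) = \<pi>2 \<cdot> (Hd \<cdot> f)" .
    qed
    have a: "hom C (e \<cdot> s0) (Dom C f) (Dom C m)" using hi hd hf by (simp add: hom_def)
    have b: "hom C Hd (Cod C f) (Cod C m)" using Hd hi hf by (simp add: hom_def)
    obtain w where w: "hom C w (Cod C f) (Dom C m)" "m \<cdot> w = Hd" using orth[OF ref hi(5) a b sq] by blast
    have w': "hom C w Y I" using w hf hi by (simp add: hom_def)
    have "(\<pi>1 \<cdot> m) \<cdot> w = Id C Y" "(\<pi>2 \<cdot> m) \<cdot> w = Id C Y"
      using w' w(2) Hd hp hi by (simp_all add: hom_def)
    thus ?thesis unfolding reflexive_rel_def reflexive_with_def using w' by blast
  qed
  have sy: "symmetric_rel C X S d0 d1 \<Longrightarrow> symmetric_rel C Y I (\<pi>1 \<cdot> m) (\<pi>2 \<cdot> m)"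
  proof -
    assume "symmetric_rel C X S d0 d1"
    then obtain \<sigma> where sg: "hom C \<sigma> S S" "d0 \<cdot> \<sigma> = d1" "d1 \<cdot> \<sigma> = d0" unfolding symmetric_rel_def by blast
    obtain sw where sw: "hom C sw P P" "\<pi>1 \<cdot> sw = \<pi>2" "\<pi>2 \<cdot> sw = \<pi>1"
      using prod_ex[OF hi(1) hp(2) hp(1)] by blast
    have sq: "m \<cdot> (e \<cdot> \<sigma>) = (sw \<cdot> m) \<cdot> e"
    proof (rule prod_ext[OF hi(1)])
      show "hom C (m \<cdot> (e \<cdot> \<sigma>)) S P" "hom C ((sw \<cdot> m) \<cdot> e) S P" using hi sg sw by (auto simp: hom_def)
      have "\<pi>1 \<cdot> (m \<cdot> (e \<cdot> \<sigma>)) = f \<cdot> (d0 \<cdot> \<sigma>)" using e1[of \<sigma>] sg by (simp add: hom_def)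
      also have "\<dots> = \<pi>2 \<cdot> (m \<cdot> e)" using sg(2) hi(7) by simp
      also have "\<dots> = (\<pi>1 \<cdot> sw) \<cdot> (m \<cdot> e)" using sw(2) by simp
      also have "\<dots> = \<pi>1 \<cdot> ((sw \<cdot> m) \<cdot> e)" using sw(1) hp hi(2,4) by (simp add: hom_def)
      finally show "\<pi>1 \<cdot> (m \<cdot> (e \<cdot> \<sigma>)) = \<pi>1 \<cdot> ((sw \<cdot> m) \<cdot> e)" .
      have "\<pi>2 \<cdot> (m \<cdot> (e \<cdot> \<sigma>)) = f \<cdot> (d1 \<cdot> \<sigma>)" using e2[of \<sigma>] sg by (simp add: hom_def)
      also have "\<dots> = \<pi>1 \<cdot> (m \<cdot> e)" using sg(3) hi(6) by simp
      also have "\<dots> = (\<pi>2 \<cdot> sw) \<cdot> (m \<cdot> e)" using sw(3) by simp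
      also have "\<dots> = \<pi>2 \<cdot> ((sw \<cdot> m) \<cdot> e)" using sw(1) hp hi(2,4) by (simp add: hom_def)
      finally show "\<pi>2 \<cdot> (m \<cdot> (e \<cdot> \<sigma>)) = \<pi>2 \<cdot> ((sw \<cdot> m) \<cdot> e)" .
    qed
    have a: "hom C (e \<cdot> \<sigma>) (Dom C e) (Dom C m)" using hi sg by (simp add: hom_def)
    have b: "hom C (sw \<cdot> m) (Cod C e) (Cod C m)" using sw hi by (simp add: hom_def)
    obtain k where k: "hom C k (Cod C e) (Dom C m)" "m \<cdot> k = sw \<cdot> m" using orth[OF hi(3) hi(5) a b sq] by blast
    have k': "hom C k I I" using k hi by (simp add: hom_def)
    have "(\<pi>1 \<cdot> m) \<cdot> k = \<pi>1 \<cdot> (m \<cdot> k)" using k' hp hi by (simp add: hom_def)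
    also have "\<dots> = (\<pi>1 \<cdot> sw) \<cdot> m" using k(2) sw(1) hp hi(4) by (simp add: hom_def)
    finally have 1: "(\<pi>1 \<cdot> m) \<cdot> k = \<pi>2 \<cdot> m" using sw(2) by simp
    have "(\<pi>2 \<cdot> m) \<cdot> k = \<pi>2 \<cdot> (m \<cdot> k)" using k' hp hi by (simp add: hom_def)
    also have "\<dots> = (\<pi>2 \<cdot> sw) \<cdot> m" using k(2) sw(1) hp hi(4) by (simp add: hom_def)
    finally have 2: "(\<pi>2 \<cdot> m) \<cdot> k = \<pi>1 \<cdot> m" using sw(3) by simp
    show ?thesis unfolding symmetric_rel_def using k' 1 2 by blast
  qed
  show ?thesis
    using rel tr rf sy unfolding sigma_equivalence_relation_def equivalence_rel_def by blast
qed

end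

theorem theorem7p8:
  fixes C :: "('o, 'a) cat" and \<Sigma> :: "('a \<times> 'a) set"
  assumes "regular_category C"
    and "fibrational C \<Sigma>"
    and "sigma_maltsev C \<Sigma>"
    and "X \<in> Obj C" and "Y \<in> Obj C"
    and "hom C f X Y" and "regular_epi C f"
    and "sigma_relation C \<Sigma> X S d0 d1 s0"
    and "direct_image_data C f Y S d0 d1 P \<pi>1 \<pi>2 I e m"
  shows "relation C Y I (Comp C \<pi>1 m) (Comp C \<pi>2 m) \<and>
         transitive_rel C Y I (Comp C \<pi>1 m) (Comp C \<pi>2 m) \<and>
         (sigma_equivalence_relation C \<Sigma> X S d0 d1 s0 \<longrightarrow>
            equivalence_rel C Y I (Comp C \<pi>1 m) (Comp C \<pi>2 m))"
proof -
  have "category C" using assms(1) unfolding regular_category_def by blast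
  then interpret rcat C by unfold_locales
  show ?thesis using final[OF assms] .
qed

end
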